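(* Let $h_1,h_2\in\mathbb{C}\setminus\{0\}$ with $|h_1|>|h_2|$, deadlines $D_1<D_2$, minimum blocklength $\hat m>0$, power budget $P_{\max}>0$, packet sizes $N_1,N_2>0$ and error probabilities $\epsilon_1,\epsilon_2\in(0,1)$. For $k=1,2$ define, for $m>0,\gamma>0$, $$F_k(m,\gamma)=\sqrt{\frac{1}{m}\left(1-\frac{1}{(\gamma+1)^2}\right)}\,\frac{Q^{-1}(\epsilon_k)}{\ln 2}-\log_2(1+\gamma)+\frac{N_k}{m},$$ and let $\Gamma_k(m)$ denote the implicit function defined by $F_k(m,\Gamma_k(m))=0$, $\Gamma_k(m)>0$. Consider the problem $$\min_{\{m_k,p_k,\gamma_k\}_{k=1,2}} m_1p_1+m_2p_2$$ subject to $F_k(m_k,\gamma_k)=0$, $\hat m\le m_k\le D_k$, $p_k\ge0$ for $k=1,2$, $p_1+p_2\le P_{\max}$, $\gamma_1=\frac{p_1|h_1|^2}{p_2|h_1|^2+1}$, $\gamma_2=\frac{p_2|h_2|^2}{p_1|h_2|^2+1}$. If $\frac{Q^{-1}(\epsilon_k)}{\sqrt{N_k}}\le \frac{2\sqrt{\ln 2}}{4-\sqrt2}=0.64394\ldots$ for $k=1,2$ and the problem is feasible, then an optimal solution is $$m_k^*=D_k,\quad \gamma_k^*=\Gamma_k(D_k)\ (k=1,2),$$ $$p_1^*=\frac{\gamma_1^*|h_2|^2+\gamma_1^*\gamma_2^*|h_1|^2}{|h_1|^2|h_2|^2(1-\gamma_1^*\gamma_2^* )},\quad p_2^*=\frac{\gamma_2^*|h_1|^2+\gamma_1^*\gamma_2^*|h_2|^2}{|h_1|^2|h_2|^2(1-\gamma_1^*\gamma_2^*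 )}.$$
   Context: $Q^{-1}$ is the inverse of the Gaussian Q-function. The setting is a two-user single-antenna downlink with superposition coding and unit noise variances, in which both receivers treat the other receiver's signal as noise. Blocklengths $m_k$ are treated as continuous variables. The constraint $F_k(m_k,\gamma_k)=0$ is the finite-blocklength rate relation $\frac{N_k}{m_k}=\log_2(1+\gamma_k)-\sqrt{\frac{1}{m_k}\big(1-\frac{1}{(1+\gamma_k)^2}\big)}\frac{Q^{-1}(\epsilon_k)}{\ln2}$. *)

theory Defs
  imports "HOL-Probability.Probability"
begin

definition Qfun :: "real \<Rightarrow> real" where
  "Qfun x = (LINT t:{x<..}|lborel. std_normal_density t)"

definition Qinv :: "real \<Rightarrow> real" where
  "Qinv e = (THE x. Qfun x = e)"

definition Ffb :: "real \<Rightarrow> real \<Rightarrow> real \<Rightarrow> real \<Rightarrow> real" where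
  "Ffb e N m \<gamma> = sqrt ((1 / m) * (1 - 1 / (\<gamma> + 1)\<^sup>2)) * Qinv e / ln 2
                   - log 2 (1 + \<gamma>) + N / m"

definition Gam :: "real \<Rightarrow> real \<Rightarrow> real \<Rightarrow> real" where
  "Gam e N m = (THE \<gamma>. \<gamma> > 0 \<and> Ffb e N m \<gamma> = 0)"

definition feasible ::
  "complex \<Rightarrow> complex \<Rightarrow> real \<Rightarrow> real \<Rightarrow> real \<Rightarrow> real \<Rightarrow> real \<Rightarrow> real \<Rightarrow> real \<Rightarrow> real
   \<Rightarrow> real \<Rightarrow> real \<Rightarrow> real \<Rightarrow> real \<Rightarrow> real \<Rightarrow> real \<Rightarrow> bool" where
  "feasible h1 h2 D1 D2 mhat Pmax N1 N2 e1 e2 m1 m2 p1 p2 \<gamma>1 \<gamma>2 \<longleftrightarrow>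
     Ffb e1 N1 m1 \<gamma>1 = 0 \<and> Ffb e2 N2 m2 \<gamma>2 = 0 \<and>
     mhat \<le> m1 \<and> m1 \<le> D1 \<and> mhat \<le> m2 \<and> m2 \<le> D2 \<and>
     p1 \<ge> 0 \<and> p2 \<ge> 0 \<and> p1 + p2 \<le> Pmax \<and>
     \<gamma>1 = p1 * (cmod h1)\<^sup>2 / (p2 * (cmod h1)\<^sup>2 + 1) \<and>
     \<gamma>2 = p2 * (cmod h2)\<^sup>2 / (p1 * (cmod h2)\<^sup>2 + 1)"

end

theory Submission
  imports Defs
begin


lemma cx_ln_lower: assumes "(g::real) \<ge> 0" shows "2 * g/(2+g) \<le> ln (1+g)"
proof -
  let ?h = "\<lambda>x::real. ln (1+x) - 2 * x/(2+x)"
  have "?h 0 \<le> ?h g"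
  proof (rule DERIV_nonneg_imp_nondecreasing[OF assms])
    fix x :: real assume x: "0 \<le> x" "x \<le> g"
    have "(?h has_real_derivative (1/(1+x) - (2 * (2+x) - 2 * x)/(2+x)^2)) (at x)"
      using x by (auto intro!: derivative_eq_intros simp: power2_eq_square)
    moreover have "1/(1+x) - (2 * (2+x) - 2 * x)/(2+x)^2 = x^2/((1+x) * (2+x)^2)"
      using x by (simp add: divide_simps) (simp add: algebra_simps power2_eq_square)
    moreover have "x^2/((1+x) * (2+x)^2) \<ge> 0" using x by simp
    ultimately show "\<exists>y. (?h has_real_derivative y) (at x) \<and> 0 \<le> y" by auto
  qed
  then show ?thesis by simp
qed

lemma cx_kdec: assumes "0 < (y1::real)" "y1 \<le> y2"
  shows "(1 - exp(-2 * y2))/y2^2 \<le> (1 - exp(-2 * y1))/y1^2"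
proof -
  let ?k = "\<lambda>y::real. (1 - exp(-2 * y))/y^2"
  show ?thesis
  proof (rule DERIV_nonpos_imp_nonincreasing[OF assms(2)])
    fix x :: real assume x: "y1 \<le> x" "x \<le> y2"
    hence xp: "x > 0" using assms by simp
    have "(?k has_real_derivative ((2 * exp(-2 * x)) * x^2 - (1 - exp(-2 * x)) * (2 * x))/(x^2)^2) (at x)"
      using xp by (auto intro!: derivative_eq_intros simp: power2_eq_square)
    moreover have "((2 * exp(-2 * x)) * x^2 - (1 - exp(-2 * x)) * (2 * x))/(x^2)^2 \<le> 0"
    proof -
      have "1 + 2 * x \<le> exp(2 * x)" using exp_ge_add_one_self[of "2 * x"] by simp
      hence "(1 + 2 * x) * exp(-2 * x) \<le> exp(2 * x) * exp(-2 * x)" by (simp add: mult_right_mono)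
      hence "(1 + 2 * x) * exp(-2 * x) \<le> 1" by (simp add: exp_add[symmetric])
      moreover have "0 \<le> x * exp(-2 * x)" using xp by simp
      ultimately have "(2 * exp(-2 * x)) * x - (1 - exp(-2 * x)) * 2 \<le> 0"
        by (simp add: algebra_simps)
      hence "x * ((2 * exp(-2 * x)) * x - (1 - exp(-2 * x)) * 2) \<le> 0" using xp
        by (intro mult_nonneg_nonpos) auto
      hence "(2 * exp(-2 * x)) * x^2 - (1 - exp(-2 * x)) * (2 * x) \<le> 0"
        by (simp add: algebra_simps power2_eq_square)
      thus ?thesis using xp by (intro divide_nonpos_pos) auto
    qed
    ultimately show "\<exists>y. (?k has_real_derivative y) (at x) \<and> y \<le> 0" by auto
  qed
qed

definition cx_ell :: "real \<Rightarrow> real" where "cx_ell g = ln (1+g)"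
definition cx_ss :: "real \<Rightarrow> real" where "cx_ss g = sqrt (1 - 1/(g+1)^2)"

lemma cx_ss_sq: assumes "g \<ge> 0" shows "(cx_ss g)^2 = 1 - exp(-2 * cx_ell g)"
proof -
  have "1 \<le> (g+1)^2" using assms by (intro one_le_power) simp
  hence "1/(g+1)^2 \<le> 1" by (simp add: divide_le_eq_1)
  hence "(cx_ss g)^2 = 1 - 1/(g+1)^2" unfolding cx_ss_def by simp
  moreover have "exp(-2 * cx_ell g) = 1/(g+1)^2"
  proof -
    have "exp(2 * cx_ell g) = exp (cx_ell g) * exp (cx_ell g)" by (simp add: exp_add[symmetric])
    also have "\<dots> = (g+1)^2" using assms unfolding cx_ell_def by (simp add: power2_eq_square add.commute)
    finally show ?thesis by (simp add: exp_minus divide_inverse)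
  qed
  ultimately show ?thesis by simp
qed

lemma cx_ell_pos: "g > 0 \<Longrightarrow> cx_ell g > 0" unfolding cx_ell_def by simp
lemma cx_ell_less: "0 \<le> g1 \<Longrightarrow> g1 < g2 \<Longrightarrow> cx_ell g1 < cx_ell g2" unfolding cx_ell_def by simp

lemma cx_ss_mono: assumes "0 \<le> g1" "g1 \<le> g2" shows "cx_ss g1 \<le> cx_ss g2"
proof -
  have "(g1+1)^2 \<le> (g2+1)^2" using assms by (intro power_mono) auto
  moreover have "0 < (g1+1)^2" using assms by simp
  moreover have "0 < (g2+1)^2" using assms by simp
  ultimately have "1/(g2+1)^2 \<le> 1/(g1+1)^2" by (intro divide_left_mono) (auto intro: mult_pos_pos)
  thus ?thesis unfolding cx_ss_def by simp
qed

lemma cx_ss_nonneg: "0 \<le> g \<Longrightarrow> 0 \<le> cx_ss g"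
  using cx_ss_mono[of 0 g] by (simp add: cx_ss_def)

lemma cx_r_mono: assumes "0 < g1" "g1 \<le> g2" shows "cx_ss g2 * cx_ell g1 \<le> cx_ss g1 * cx_ell g2"
proof -
  have l1: "cx_ell g1 > 0" using assms cx_ell_pos by simp
  have l12: "cx_ell g1 \<le> cx_ell g2" using assms cx_ell_less[of g1 g2] by (cases "g1 = g2") auto
  have "(1 - exp(-2 * cx_ell g2))/(cx_ell g2)^2 \<le> (1 - exp(-2 * cx_ell g1))/(cx_ell g1)^2"
    by (rule cx_kdec[OF l1 l12])
  hence "(cx_ss g2)^2/(cx_ell g2)^2 \<le> (cx_ss g1)^2/(cx_ell g1)^2"
    using cx_ss_sq[of g1] cx_ss_sq[of g2] assms by simp
  hence "(cx_ss g2)^2 * (cx_ell g1)^2 \<le> (cx_ss g1)^2 * (cx_ell g2)^2"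
    using l1 l12 by (simp add: divide_simps)
  hence "(cx_ss g2 * cx_ell g1)^2 \<le> (cx_ss g1 * cx_ell g2)^2" by (simp add: power_mult_distrib)
  moreover have "0 \<le> cx_ss g1 * cx_ell g2" using cx_ss_nonneg[of g1] l1 l12 assms by simp
  ultimately show ?thesis using power2_le_imp_le by blast
qed

lemma cx_quad_mono:
  fixes \<alpha> \<beta> z1 z2 :: real
  assumes "\<alpha> > 0" "0 < z1" "z1 < z2" "\<alpha> * z1^2 + \<beta> * z1 > 0"
  shows "\<alpha> * z1^2 + \<beta> * z1 < \<alpha> * z2^2 + \<beta> * z2"
proof -
  have "z1 * (\<alpha> * z1 + \<beta>) > 0" using assms(4) by (simp add: algebra_simps power2_eq_square)
  hence "\<alpha> * z1 + \<beta> > 0" using assms(2) by (simp add: zero_less_mult_iff)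
  moreover have "\<alpha> * z2 > 0" using assms by simp
  ultimately have "\<alpha> * (z1+z2) + \<beta> > 0" by (simp add: algebra_simps)
  hence "(z2 - z1) * (\<alpha> * (z1+z2) + \<beta>) > 0" using assms by simp
  thus ?thesis by (simp add: algebra_simps power2_eq_square)
qed

definition cx_qd :: "real \<Rightarrow> real \<Rightarrow> real \<Rightarrow> real \<Rightarrow> real" where
  "cx_qd Q Nn g u = cx_ell g * u^2 - Q * cx_ss g * u - Nn"

lemma cx_U_dec:
  assumes "0 < g1" "g1 < g2" "0 < u1" "0 < u2" "Nn > 0"
    and q1: "cx_qd Q Nn g1 u1 = 0" and q2: "cx_qd Q Nn g2 u2 = 0"
  shows "u2 < u1"
proof (rule ccontr)
  assume "\<not> u2 < u1" hence le: "u1 \<le> u2" by simp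
  define l1 l2 s1 s2 where "l1 = cx_ell g1" "l2 = cx_ell g2" "s1 = cx_ss g1" "s2 = cx_ss g2"
  have l1p: "l1 > 0" and l12: "l1 < l2" using assms cx_ell_pos cx_ell_less unfolding l1_l2_s1_s2_def by auto
  have s12: "s1 \<le> s2" using cx_ss_mono assms unfolding l1_l2_s1_s2_def by simp
  have r: "s2 * l1 \<le> s1 * l2" using cx_r_mono assms unfolding l1_l2_s1_s2_def by simp
  have e1: "l1 * u1^2 - Q * s1 * u1 = Nn" and e2: "l2 * u2^2 - Q * s2 * u2 = Nn"
    using q1 q2 unfolding cx_qd_def l1_l2_s1_s2_def by auto
  have "u1 * (l1 * u1 - Q * s1) = Nn" using e1 by (simp add: algebra_simps power2_eq_square)
  hence "u1 * (l1 * u1 - Q * s1) > 0" using assms by simp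
  hence p1: "l1 * u1 - Q * s1 > 0" using assms(3) by (simp add: zero_less_mult_iff)
  have key: "(l2-l1) * u1 - Q * (s2-s1) > 0"
  proof -
    have c1: "l1 * ((l2-l1) * u1 - Q * (s2-s1)) = (l2-l1) * (l1 * u1 - Q * s1) + Q * (l2 * s1 - l1 * s2)"
      by (simp add: algebra_simps)
    have c2: "(l2-l1) * (l1 * u1 - Q * s1) > 0" using p1 l12 by simp
    have c3: "Q * (l2 * s1 - l1 * s2) \<ge> 0 \<or> Q \<le> 0" using r
      by (cases "Q \<le> 0") (auto simp: algebra_simps)
    show ?thesis
    proof (cases "Q \<le> 0")
      case True
      have "Q * (s2-s1) \<le> 0" using True s12 by (simp add: mult_nonpos_nonneg)
      moreover have "(l2-l1) * u1 > 0" using l12 assms by simp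
      ultimately show ?thesis by simp
    next
      case False
      hence "l1 * ((l2-l1) * u1 - Q * (s2-s1)) > 0" using c1 c2 c3 by auto
      thus ?thesis using l1p by (simp add: zero_less_mult_iff)
    qed
  qed
  have k2: "l2 * u1^2 + (-Q * s2) * u1 > Nn"
  proof -
    have "l2 * u1^2 + (-Q * s2) * u1 - Nn = u1 * ((l2-l1) * u1 - Q * (s2-s1))"
      using e1 by (simp add: algebra_simps power2_eq_square)
    moreover have "u1 * ((l2-l1) * u1 - Q * (s2-s1)) > 0" using key assms by simp
    ultimately show ?thesis by simp
  qed
  show False
  proof (cases "u1 = u2")
    case True thus False using k2 e2 by simp
  next
    case False
    hence "u1 < u2" using le by simp
    hence "l2 * u1^2 + (-Q * s2) * u1 < l2 * u2^2 + (-Q * s2) * u2"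
      using cx_quad_mono[of l2 u1 u2 "-Q * s2"] l1p l12 assms k2 by simp
    thus False using k2 e2 by simp
  qed
qed



definition cx_aa :: "real \<Rightarrow> real" where "cx_aa g = sqrt(2+g)/(1+g)"
definition cx_aa' :: "real \<Rightarrow> real" where "cx_aa' g = -(3+g)/(2 * sqrt(2+g) * (1+g)^2)"
definition cx_bb :: "real \<Rightarrow> real" where "cx_bb g = ln(1+g)/g"
definition cx_bb' :: "real \<Rightarrow> real" where "cx_bb' g = (g/(1+g) - ln(1+g))/g^2"

lemma cx_aa_deriv: assumes "g > 0" shows "(cx_aa has_real_derivative cx_aa' g) (at g)"
proof -
  have s: "sqrt(2+g) > 0" "sqrt(2+g)^2 = 2+g" using assms by auto
  have "((\<lambda>g. sqrt(2+g)/(1+g)) has_real_derivative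
          ((inverse (sqrt(2+g)) / 2) * (1+g) - sqrt(2+g) * 1)/((1+g) * (1+g))) (at g)"
    using assms by (auto intro!: derivative_eq_intros)
  moreover have "((inverse (sqrt(2+g)) / 2) * (1+g) - sqrt(2+g) * 1)/((1+g) * (1+g)) = cx_aa' g"
    unfolding cx_aa'_def using s assms
    by (simp add: field_simps power2_eq_square)
  ultimately show ?thesis unfolding cx_aa_def by simp
qed

lemma cx_bb_deriv: assumes "g > 0" shows "(cx_bb has_real_derivative cx_bb' g) (at g)"
proof -
  have "((\<lambda>g. ln(1+g)/g) has_real_derivative ((1/(1+g)) * g - ln(1+g) * 1)/(g * g)) (at g)"
    using assms by (auto intro!: derivative_eq_intros)
  moreover have "((1/(1+g)) * g - ln(1+g) * 1)/(g * g) = cx_bb' g"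
    unfolding cx_bb'_def using assms by (simp add: power2_eq_square divide_simps)
  ultimately show ?thesis unfolding cx_bb_def by simp
qed

lemma cx_aa_prod_gen: assumes "(s::real) > 0" "g > 0"
  shows "s/(1+g) * (-(3+g)/(2 * s * (1+g)^2)) = -(3+g)/(2 * (1+g)^3)"
  using assms by (simp add: divide_simps power2_eq_square power3_eq_cube)

lemma cx_aa_prod: assumes "g > 0" shows "cx_aa g * cx_aa' g = -(3+g)/(2 * (1+g)^3)"
  using cx_aa_prod_gen[of "sqrt(2+g)" g] assms unfolding cx_aa_def cx_aa'_def by simp

lemma cx_aa'_sq_gen: assumes "(s::real) > 0" "g > 0" "s^2 = 2+g"
  shows "(-(3+g)/(2 * s * (1+g)^2))^2 = (3+g)^2/(4 * (2+g) * (1+g)^4)"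
proof -
  have "(2 * s * (1+g)^2)^2 = 4 * s^2 * ((1+g)^4)" by algebra
  moreover have "(-3-g)^2 = (3+g)^2" by algebra
  ultimately have "(-(3+g)/(2 * s * (1+g)^2))^2 = (3+g)^2/(4 * s^2 * (1+g)^4)"
    by (simp add: power_divide)
  thus ?thesis using assms(3) by simp
qed

lemma cx_aa'_sq: assumes "g > 0" shows "(cx_aa' g)^2 = (3+g)^2/(4 * (2+g) * (1+g)^4)"
  using cx_aa'_sq_gen[of "sqrt(2+g)" g] assms unfolding cx_aa'_def by simp



definition cx_FF :: "real \<Rightarrow> real \<Rightarrow> real" where
  "cx_FF g P = 6 * (2+g) * (1+g)^5 * P^2 + (3+g) * g^2 * (g^2+3 * g+4) * (1+g) * P - (3+g)^2 * g^4"

lemma cx_FF_P0: assumes "g > 0" shows "cx_FF g (g^2/((2+g) * (1+g))) = g^4 * (2 * (1+g) * (3 * g^2+5 * g))/(2+g)"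
proof -
  have "(2+g) > 0" "1+g > 0" using assms by auto
  thus ?thesis unfolding cx_FF_def by (simp add: divide_simps) algebra
qed

lemma cx_FF_nonneg: assumes "g > 0" "P \<ge> g^2/((2+g) * (1+g))" shows "cx_FF g P \<ge> 0"
proof -
  define P0 where "P0 = g^2/((2+g) * (1+g))"
  have P0: "P0 \<ge> 0" unfolding P0_def using assms by simp
  have "cx_FF g P - cx_FF g P0 = (P-P0) * (6 * (2+g) * (1+g)^5 * (P+P0) + (3+g) * g^2 * (g^2+3 * g+4) * (1+g))"
    unfolding cx_FF_def by algebra
  moreover have "(P-P0) * (6 * (2+g) * (1+g)^5 * (P+P0) + (3+g) * g^2 * (g^2+3 * g+4) * (1+g)) \<ge> 0"
    using assms P0 unfolding P0_def[symmetric] by (intro mult_nonneg_nonneg add_nonneg_nonneg) auto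
  moreover have "cx_FF g P0 \<ge> 0" unfolding P0_def using cx_FF_P0[OF assms(1)] assms by simp
  ultimately show ?thesis by linarith
qed

lemma cx_KI0: assumes "g > 0"
  shows "cx_bb g * (cx_aa' g)^2 - cx_aa g * cx_aa' g * cx_bb' g \<le> 3/2 * (cx_bb' g)^2"
proof -
  define L where "L = ln(1+g)"
  define P where "P = L - g/(1+g)"
  have "2 * g/(2+g) \<le> L" unfolding L_def using cx_ln_lower assms by simp
  moreover have "2 * g/(2+g) - g/(1+g) = g^2/((2+g) * (1+g))" using assms
    by (simp add: field_simps power2_eq_square)
  ultimately have PP: "P \<ge> g^2/((2+g) * (1+g))" unfolding P_def by linarith
  have F: "cx_FF g P \<ge> 0" using cx_FF_nonneg[OF assms PP] .
  have b: "cx_bb g = (P + g/(1+g))/g" "cx_bb' g = -P/g^2" unfolding cx_bb_def cx_bb'_def P_def L_def by auto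
  have "3/2 * (cx_bb' g)^2 - (cx_bb g * (cx_aa' g)^2 - cx_aa g * cx_aa' g * cx_bb' g) = cx_FF g P/(4 * (2+g) * (1+g)^5 * g^4)"
  proof -
    have "(2+g) > 0" "1+g > 0" using assms by auto
    thus ?thesis unfolding b cx_aa_prod[OF assms] cx_aa'_sq[OF assms] cx_FF_def using assms
      by (simp add: divide_simps) algebra
  qed
  moreover have "cx_FF g P/(4 * (2+g) * (1+g)^5 * g^4) \<ge> 0" using F assms by simp
  ultimately show ?thesis by linarith
qed



lemma cx_signs: assumes "g > 0"
  shows "cx_aa' g < 0" "cx_bb' g < 0" "cx_bb g > 0" "cx_aa g > 0"
proof -
  show "cx_aa' g < 0" using assms unfolding cx_aa'_def by (simp add: divide_neg_pos)
  show "cx_aa g > 0" using assms unfolding cx_aa_def by simp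
  show "cx_bb g > 0" using assms unfolding cx_bb_def by simp
  have "2 * g/(2+g) \<le> ln(1+g)" using cx_ln_lower assms by simp
  moreover have "g/(1+g) < 2 * g/(2+g)" using assms by (simp add: field_simps)
  ultimately show "cx_bb' g < 0" using assms unfolding cx_bb'_def by (simp add: divide_neg_pos)
qed

definition cx_VV :: "real \<Rightarrow> real \<Rightarrow> real \<Rightarrow> real" where
  "cx_VV Q Nn g = (Q * cx_aa g + sqrt((Q * cx_aa g)^2 + 4 * cx_bb g * Nn))/(2 * cx_bb g)"

lemma cx_root_explicit:
  fixes b a Q Nn v :: real
  assumes "b > 0" "Nn > 0" "v > 0" "b * v^2 - Q * a * v = Nn"
  shows "v = (Q * a + sqrt((Q * a)^2 + 4 * b * Nn))/(2 * b)"
proof -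
  have "v * (b * v - Q * a) = Nn" using assms(4) by (simp add: algebra_simps power2_eq_square)
  hence "v * (b * v - Q * a) > 0" using assms by simp
  hence "b * v - Q * a > 0" using assms(3) by (simp add: zero_less_mult_iff)
  moreover have "b * v > 0" using assms by simp
  ultimately have pos: "2 * b * v - Q * a \<ge> 0" by simp
  have "(2 * b * v - Q * a)^2 = (Q * a)^2 + 4 * b * (b * v^2 - Q * a * v)" by algebra
  hence "(2 * b * v - Q * a)^2 = (Q * a)^2 + 4 * b * Nn" using assms(4) by simp
  hence "sqrt((Q * a)^2 + 4 * b * Nn) = 2 * b * v - Q * a" using pos by (metis real_sqrt_abs abs_of_nonneg)
  thus ?thesis using assms(1) by (simp add: field_simps)
qed

lemma cx_DD_eq:
  fixes a a' b b' Q Nn S :: real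
  assumes "b > 0" "S > 0" "S^2 = (Q * a)^2 + 4 * b * Nn"
  shows "((Q * a' + (2 * (Q * a) * (Q * a') + 4 * b' * Nn)/(2 * S)) * (2 * b) - (Q * a + S) * (2 * b'))/(2 * b)^2
         = ((Q * a+S)/(2 * b)) * (Q * a' - b' * ((Q * a+S)/(2 * b))) / S"
proof -
  have N: "Nn = (S^2 - (Q * a)^2)/(4 * b)" using assms by (simp add: field_simps)
  show ?thesis unfolding N using assms(1,2) by (simp add: divide_simps) algebra
qed

lemma cx_VV_deriv_gen:
  fixes a b :: "real \<Rightarrow> real"
  assumes da: "(a has_real_derivative a') (at x)" and db: "(b has_real_derivative b') (at x)"
    and bp: "b x > 0" and Np: "Nn > 0"
  shows "((\<lambda>x. (Q * a x + sqrt((Q * a x)^2 + 4 * b x * Nn))/(2 * b x)) has_real_derivative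
          ((Q * a' + (2 * (Q * a x) * (Q * a') + 4 * b' * Nn)/(2 * sqrt((Q * a x)^2 + 4 * b x * Nn))) * (2 * b x)
            - (Q * a x + sqrt((Q * a x)^2 + 4 * b x * Nn)) * (2 * b'))/(2 * b x)^2) (at x)"
proof -
  have W: "(Q * a x)^2 + 4 * b x * Nn > 0" using bp Np by (simp add: add_nonneg_pos)
  show ?thesis
    using da db bp W
    by (auto intro!: derivative_eq_intros simp: power2_eq_square divide_simps)
qed



lemma cx_VV_root: assumes "g > 0" "Nn > 0"
  shows "cx_VV Q Nn g > 0" "cx_bb g * (cx_VV Q Nn g)^2 - Q * cx_aa g * cx_VV Q Nn g = Nn"
proof -
  define a b where "a = cx_aa g" "b = cx_bb g"
  define S where "S = sqrt((Q * a)^2 + 4 * b * Nn)"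
  have bp: "b > 0" unfolding a_b_def using cx_signs assms by simp
  have W: "(Q * a)^2 + 4 * b * Nn > (Q * a)^2" using bp assms by simp
  have nn: "0 \<le> (Q * a)^2 + 4 * b * Nn" using W by (meson le_less_trans zero_le_power2 less_imp_le)
  have S2: "S^2 = (Q * a)^2 + 4 * b * Nn" unfolding S_def using nn by simp
  have "sqrt((Q * a)^2) < S" unfolding S_def using W by (rule real_sqrt_less_mono)
  hence "S > \<bar>Q * a\<bar>" by simp
  hence Sp: "Q * a + S > 0" by linarith
  have V: "cx_VV Q Nn g = (Q * a + S)/(2 * b)" unfolding cx_VV_def S_def a_b_def by simp
  show "cx_VV Q Nn g > 0" unfolding V using Sp bp by simp
  have "b * ((Q * a + S)/(2 * b))^2 - Q * a * ((Q * a + S)/(2 * b)) = (S^2 - (Q * a)^2)/(4 * b)"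
    using bp by (simp add: divide_simps) algebra
  also have "\<dots> = Nn" using S2 bp by simp
  finally have "b * (cx_VV Q Nn g)^2 - Q * a * cx_VV Q Nn g = Nn" unfolding V .
  thus "cx_bb g * (cx_VV Q Nn g)^2 - Q * cx_aa g * cx_VV Q Nn g = Nn" unfolding a_b_def .
qed

lemma cx_KI: assumes "g > 0" "Nn > 0" "Q \<le> 0 \<or> 3 * Q^2 \<le> 2 * Nn"
  shows "Q * cx_aa' g - cx_bb' g * cx_VV Q Nn g \<ge> 0"
proof -
  define a a' b b' V where "a = cx_aa g" "a' = cx_aa' g" "b = cx_bb g" "b' = cx_bb' g" "V = cx_VV Q Nn g"
  have sg: "a' < 0" "b' < 0" "b > 0" "a > 0" using cx_signs[OF assms(1)] unfolding a_a'_b_b'_V_def by auto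
  have Vp: "V > 0" and Ve: "b * V^2 - Q * a * V = Nn" using cx_VV_root[OF assms(1,2), of Q] unfolding a_a'_b_b'_V_def by auto
  show ?thesis
  proof (cases "Q \<le> 0")
    case True
    have "Q * a' \<ge> 0" using True sg by (simp add: mult_nonpos_nonpos)
    moreover have "b' * V \<le> 0" using sg Vp by (simp add: mult_neg_pos less_imp_le)
    ultimately show ?thesis unfolding a_a'_b_b'_V_def by simp
  next
    case False
    hence Qp: "Q > 0" and Q2: "3 * Q^2 \<le> 2 * Nn" using assms(3) by auto
    define y where "y = Q * a'/b'"
    have "Q * a' < 0" using Qp sg by (simp add: mult_pos_neg)
    hence yp: "y > 0" unfolding y_def using sg by (simp add: divide_neg_neg)
    have K0: "b * a'^2 - a * a' * b' \<le> 3/2 * b'^2" using cx_KI0[OF assms(1)] unfolding a_a'_b_b'_V_def by simp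
    have "b * y^2 - Q * a * y = Q^2 * (b * a'^2 - a * a' * b')/b'^2" unfolding y_def using sg
      by (simp add: divide_simps) algebra
    also have "\<dots> \<le> Q^2 * (3/2 * b'^2)/b'^2" using K0 sg
      by (intro divide_right_mono mult_left_mono) auto
    also have "\<dots> = 3/2 * Q^2" using sg by simp
    also have "\<dots> \<le> Nn" using Q2 by simp
    finally have yb: "b * y^2 - Q * a * y \<le> Nn" .
    have "y \<le> V"
    proof (rule ccontr)
      assume "\<not> y \<le> V" hence "V < y" by simp
      hence "b * V^2 + (-Q * a) * V < b * y^2 + (-Q * a) * y"
        using cx_quad_mono[of b V y "-Q * a"] sg Vp Ve assms(2) by simp
      thus False using Ve yb by simp
    qed
    hence "b' * V \<le> b' * y" using sg by (simp add: mult_left_mono_neg)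
    also have "b' * y = Q * a'" unfolding y_def using sg by simp
    finally show ?thesis unfolding a_a'_b_b'_V_def by simp
  qed
qed

lemma cx_VV_mono: assumes "0 < g1" "g1 \<le> g2" "Nn > 0" "Q \<le> 0 \<or> 3 * Q^2 \<le> 2 * Nn"
  shows "cx_VV Q Nn g1 \<le> cx_VV Q Nn g2"
proof (rule DERIV_nonneg_imp_nondecreasing[OF assms(2)])
  fix x assume x: "g1 \<le> x" "x \<le> g2"
  hence xp: "x > 0" using assms by simp
  define S where "S = sqrt((Q * cx_aa x)^2 + 4 * cx_bb x * Nn)"
  have bp: "cx_bb x > 0" using cx_signs xp by simp
  have W: "(Q * cx_aa x)^2 + 4 * cx_bb x * Nn > 0" using bp assms by (simp add: add_nonneg_pos)
  have Sp: "S > 0" and S2: "S^2 = (Q * cx_aa x)^2 + 4 * cx_bb x * Nn" unfolding S_def using W by auto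
  have d: "(cx_VV Q Nn has_real_derivative
          ((Q * cx_aa' x + (2 * (Q * cx_aa x) * (Q * cx_aa' x) + 4 * cx_bb' x * Nn)/(2 * S)) * (2 * cx_bb x)
            - (Q * cx_aa x + S) * (2 * cx_bb' x))/(2 * cx_bb x)^2) (at x)"
    unfolding S_def cx_VV_def[abs_def]
    by (rule cx_VV_deriv_gen[OF cx_aa_deriv[OF xp] cx_bb_deriv[OF xp] bp assms(3)])
  have V: "cx_VV Q Nn x = (Q * cx_aa x+S)/(2 * cx_bb x)" unfolding cx_VV_def S_def by simp
  have eq: "((Q * cx_aa' x + (2 * (Q * cx_aa x) * (Q * cx_aa' x) + 4 * cx_bb' x * Nn)/(2 * S)) * (2 * cx_bb x)
            - (Q * cx_aa x + S) * (2 * cx_bb' x))/(2 * cx_bb x)^2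
         = cx_VV Q Nn x * (Q * cx_aa' x - cx_bb' x * cx_VV Q Nn x) / S"
    unfolding V by (rule cx_DD_eq[OF bp Sp S2])
  have "cx_VV Q Nn x * (Q * cx_aa' x - cx_bb' x * cx_VV Q Nn x) / S \<ge> 0"
    using cx_VV_root(1)[OF xp assms(3), of Q] cx_KI[OF xp assms(3,4)] Sp by simp
  thus "\<exists>y. (cx_VV Q Nn has_real_derivative y) (at x) \<and> 0 \<le> y" using d eq by metis
qed

lemma cx_ss_alt: assumes "g > 0" shows "cx_ss g = sqrt g * cx_aa g"
proof -
  have "1 - 1/(g+1)^2 = g * (2+g)/(1+g)^2" using assms
    by (simp add: divide_simps) (simp add: algebra_simps power2_eq_square)
  thus ?thesis unfolding cx_ss_def cx_aa_def using assms by (simp add: real_sqrt_mult real_sqrt_divide)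
qed

lemma cx_link: assumes "g > 0" "u > 0" "Nn > 0" "cx_qd Q Nn g u = 0"
  shows "u * sqrt g = cx_VV Q Nn g"
proof -
  have e: "cx_ell g = g * cx_bb g" unfolding cx_ell_def cx_bb_def using assms by simp
  have "cx_bb g * (u * sqrt g)^2 - Q * cx_aa g * (u * sqrt g) = cx_ell g * u^2 - Q * cx_ss g * u"
    unfolding e cx_ss_alt[OF assms(1)] using assms by (simp add: power_mult_distrib algebra_simps)
  also have "\<dots> = Nn" using assms(4) unfolding cx_qd_def by simp
  finally have r: "cx_bb g * (u * sqrt g)^2 - Q * cx_aa g * (u * sqrt g) = Nn" .
  have "u * sqrt g = (Q * cx_aa g + sqrt((Q * cx_aa g)^2 + 4 * cx_bb g * Nn))/(2 * cx_bb g)"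
    using cx_root_explicit[OF _ assms(3) _ r] cx_signs[OF assms(1)] assms by simp
  thus ?thesis unfolding cx_VV_def .
qed



lemma cx_qd_cont: "continuous_on {a..b} (\<lambda>g. cx_qd Q Nn g c)" if "a > 0" for a b
  unfolding cx_qd_def cx_ell_def cx_ss_def using that
  by (intro continuous_intros) (auto simp: add_pos_pos)

lemma cx_SU_qd:
  assumes Np: "Nn > 0" and cond: "Q \<le> 0 \<or> 3 * Q^2 \<le> 2 * Nn"
    and m: "0 < m" "m \<le> D" and gp: "\<gamma> > 0" and q: "cx_qd Q Nn \<gamma> (sqrt m) = 0"
  shows "\<exists>g. 0 < g \<and> g \<le> \<gamma> \<and> cx_qd Q Nn g (sqrt D) = 0 \<and> D * g \<le> m * \<gamma> \<and>
             (\<forall>g'. g' > 0 \<and> cx_qd Q Nn g' (sqrt D) = 0 \<longrightarrow> g' = g)"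
proof -
  have Dp: "D > 0" using m by simp
  have sm: "0 < sqrt m" "sqrt m \<le> sqrt D" using m by auto
  have lg: "cx_ell \<gamma> > 0" using cx_ell_pos gp by simp
  have e: "cx_ell \<gamma> * (sqrt m)^2 + (- Q * cx_ss \<gamma>) * sqrt m = Nn" using q unfolding cx_qd_def by simp
  have hi: "cx_qd Q Nn \<gamma> (sqrt D) \<ge> 0"
  proof (cases "sqrt m = sqrt D")
    case True thus ?thesis using q by simp
  next
    case False
    hence "sqrt m < sqrt D" using sm by simp
    hence "cx_ell \<gamma> * (sqrt m)^2 + (- Q * cx_ss \<gamma>) * sqrt m < cx_ell \<gamma> * (sqrt D)^2 + (- Q * cx_ss \<gamma>) * sqrt D"
      using cx_quad_mono[OF lg sm(1) _, of "sqrt D" "- Q * cx_ss \<gamma>"] e Np by linarith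
    thus ?thesis using e unfolding cx_qd_def by simp
  qed
  have ic: "isCont (\<lambda>g. cx_qd Q Nn g (sqrt D)) 0"
    unfolding cx_qd_def cx_ell_def cx_ss_def by (intro continuous_intros) auto
  have "((\<lambda>g. cx_qd Q Nn g (sqrt D)) \<longlongrightarrow> cx_qd Q Nn 0 (sqrt D)) (at_right 0)"
    using ic isCont_def tendsto_mono at_le by (metis top_greatest)
  moreover have "cx_qd Q Nn 0 (sqrt D) = -Nn" unfolding cx_qd_def cx_ell_def cx_ss_def by simp
  ultimately have "eventually (\<lambda>g. cx_qd Q Nn g (sqrt D) < 0) (at_right 0)"
    using order_tendstoD(2) Np by fastforce
  then obtain bnd where bnd: "bnd > 0" "\<And>y. y > 0 \<Longrightarrow> y < bnd \<Longrightarrow> cx_qd Q Nn y (sqrt D) < 0"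
    unfolding eventually_at_right_field by auto
  define g0 where "g0 = min \<gamma> (bnd/2)"
  have g0: "0 < g0" "g0 \<le> \<gamma>" "cx_qd Q Nn g0 (sqrt D) < 0" unfolding g0_def using bnd gp by auto
  obtain g where g: "g0 \<le> g" "g \<le> \<gamma>" "cx_qd Q Nn g (sqrt D) = 0"
    using IVT'[of "\<lambda>g. cx_qd Q Nn g (sqrt D)" g0 0 \<gamma>] g0 hi cx_qd_cont[OF g0(1)] by auto
  have gpos: "g > 0" using g g0 by simp
  have sD: "sqrt D > 0" using Dp by simp
  have uniq: "\<forall>g'. g' > 0 \<and> cx_qd Q Nn g' (sqrt D) = 0 \<longrightarrow> g' = g"
  proof (intro allI impI)
    fix g' assume h: "g' > 0 \<and> cx_qd Q Nn g' (sqrt D) = 0"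
    show "g' = g"
    proof (rule ccontr)
      assume "g' \<noteq> g"
      hence "g' < g \<or> g < g'" by auto
      thus False
      proof
        assume "g' < g" thus False using cx_U_dec[of g' g "sqrt D" "sqrt D" Nn Q] h g gpos sD Np by auto
      next
        assume "g < g'" thus False using cx_U_dec[of g g' "sqrt D" "sqrt D" Nn Q] h g gpos sD Np by auto
      qed
    qed
  qed
  have "sqrt D * sqrt g = cx_VV Q Nn g" using cx_link[OF gpos sD Np g(3)] .
  also have "\<dots> \<le> cx_VV Q Nn \<gamma>" using cx_VV_mono[OF gpos g(2) Np cond] .
  also have "\<dots> = sqrt m * sqrt \<gamma>" using cx_link[OF gp sm(1) Np q] by simp
  finally have "sqrt (D * g) \<le> sqrt (m * \<gamma>)" by (simp add: real_sqrt_mult)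
  hence "D * g \<le> m * \<gamma>" by simp
  thus ?thesis using gpos g uniq by blast
qed


lemma cx_bridge:
  assumes "m > 0" "\<gamma> \<ge> 0"
  shows "Ffb e N m \<gamma> = 0 \<longleftrightarrow> cx_qd (Qinv e) (N * ln 2) \<gamma> (sqrt m) = 0"
proof -
  define s where "s = sqrt m"
  have sp: "s > 0" and ms: "m = s^2" unfolding s_def using assms by auto
  have "sqrt ((1/m) * (1 - 1/(\<gamma>+1)^2)) = cx_ss \<gamma> / s"
    unfolding cx_ss_def ms using sp by (simp add: real_sqrt_mult real_sqrt_divide)
  moreover have "log 2 (1+\<gamma>) = cx_ell \<gamma> / ln 2" unfolding cx_ell_def log_def by simp
  ultimately have "Ffb e N m \<gamma> = cx_ss \<gamma> / s * Qinv e / ln 2 - cx_ell \<gamma> / ln 2 + N / s^2"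
    unfolding Ffb_def ms by simp
  also have "\<dots> = - cx_qd (Qinv e) (N * ln 2) \<gamma> s / (s^2 * ln 2)"
    unfolding cx_qd_def using sp by (simp add: divide_simps) algebra
  finally show ?thesis using sp unfolding s_def by simp
qed

lemma cx_cond:
  assumes "N > 0" "Q / sqrt N \<le> 2 * sqrt (ln 2) / (4 - sqrt 2)"
  shows "Q \<le> 0 \<or> 3 * Q^2 \<le> 2 * (N * ln 2)"
proof (cases "Q \<le> 0")
  case False
  have s2: "sqrt 2 < 3/2" by (rule real_less_lsqrt) (auto simp: power2_eq_square)
  hence d: "4 - sqrt 2 > 0" by simp
  have "Q \<le> 2 * sqrt (ln 2) / (4 - sqrt 2) * sqrt N" using assms by (simp add: divide_le_eq)
  hence "Q^2 \<le> (2 * sqrt (ln 2) / (4 - sqrt 2) * sqrt N)^2" using False by (intro power_mono) auto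
  also have "\<dots> = 4 * (N * ln 2) / (4 - sqrt 2)^2" using assms d
    by (simp add: power_mult_distrib power_divide)
  also have "\<dots> \<le> 4 * (N * ln 2) / 6"
  proof (rule divide_left_mono)
    have "(4 - sqrt 2)^2 = 18 - 8 * sqrt 2" by (simp add: power2_eq_square algebra_simps)
    thus "6 \<le> (4 - sqrt 2)^2" using s2 by simp
  qed (use assms d s2 in auto)
  finally show ?thesis by simp
qed simp

lemma cx_SU:
  assumes "N > 0" "Qinv e / sqrt N \<le> 2 * sqrt (ln 2) / (4 - sqrt 2)"
    and "0 < m" "m \<le> D" "\<gamma> \<ge> 0" "Ffb e N m \<gamma> = 0"
  shows "0 < Gam e N D \<and> Gam e N D \<le> \<gamma> \<and> Ffb e N D (Gam e N D) = 0 \<and> D * Gam e N D \<le> m * \<gamma>"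
proof -
  have Np: "N * ln 2 > 0" using assms by simp
  have gp: "\<gamma> > 0"
  proof (rule ccontr)
    assume "\<not> \<gamma> > 0" hence "\<gamma> = 0" using assms by simp
    thus False using assms(1,3,6) unfolding Ffb_def by simp
  qed
  have Dp: "D > 0" using assms by simp
  have q: "cx_qd (Qinv e) (N * ln 2) \<gamma> (sqrt m) = 0" using cx_bridge assms by blast
  obtain g where g: "0 < g" "g \<le> \<gamma>" "cx_qd (Qinv e) (N * ln 2) g (sqrt D) = 0" "D * g \<le> m * \<gamma>"
    and u: "\<forall>g'. g' > 0 \<and> cx_qd (Qinv e) (N * ln 2) g' (sqrt D) = 0 \<longrightarrow> g' = g"
    using cx_SU_qd[OF Np cx_cond[OF assms(1,2)] assms(3,4) gp q] by blast
  have F: "Ffb e N D g = 0" using cx_bridge[of D g] g Dp by simp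
  have "Gam e N D = g" unfolding Gam_def
  proof (rule the_equality)
    show "0 < g \<and> Ffb e N D g = 0" using g F by simp
    fix g' assume "0 < g' \<and> Ffb e N D g' = 0"
    thus "g' = g" using u cx_bridge[of D g'] Dp by auto
  qed
  thus ?thesis using g F by simp
qed


lemma cx_compare:
  fixes h1 h2 :: complex
    and D1 D2 mhat Pmax N1 N2 e1 e2 :: real
  assumes "h1 \<noteq> 0" "h2 \<noteq> 0" "cmod h1 > cmod h2"
    and "D1 < D2" "mhat > 0" "Pmax > 0" "N1 > 0" "N2 > 0"
    and "0 < e1" "e1 < 1" "0 < e2" "e2 < 1"
    and "Qinv e1 / sqrt N1 \<le> 2 * sqrt (ln 2) / (4 - sqrt 2)"
    and "Qinv e2 / sqrt N2 \<le> 2 * sqrt (ln 2) / (4 - sqrt 2)"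
    and "feasible h1 h2 D1 D2 mhat Pmax N1 N2 e1 e2 m1 m2 p1 p2 \<gamma>1 \<gamma>2"
  shows "let g1 = Gam e1 N1 D1; g2 = Gam e2 N2 D2;
             a1 = (cmod h1)\<^sup>2; a2 = (cmod h2)\<^sup>2;
             p1' = (g1 * a2 + g1 * g2 * a1) / (a1 * a2 * (1 - g1 * g2));
             p2' = (g2 * a1 + g1 * g2 * a2) / (a1 * a2 * (1 - g1 * g2))
         in 0 < g1 \<and> 0 < g2 \<and> Ffb e1 N1 D1 g1 = 0 \<and> Ffb e2 N2 D2 g2 = 0 \<and> g1 * g2 < 1 \<and>
            0 \<le> p1' \<and> 0 \<le> p2' \<and> p1' + p2' \<le> Pmax \<and> mhat \<le> D1 \<and> mhat \<le> D2 \<and>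
            D1 * p1' + D2 * p2' \<le> m1 * p1 + m2 * p2"
proof -
  note fe = assms(15)
  define a1 a2 where "a1 = (cmod h1)\<^sup>2" "a2 = (cmod h2)\<^sup>2"
  have a: "a1 > 0" "a2 > 0" unfolding a1_a2_def using assms(1,2) by auto
  have F1: "Ffb e1 N1 m1 \<gamma>1 = 0" and F2: "Ffb e2 N2 m2 \<gamma>2 = 0"
    and m: "mhat \<le> m1" "m1 \<le> D1" "mhat \<le> m2" "m2 \<le> D2"
    and p: "p1 \<ge> 0" "p2 \<ge> 0" "p1 + p2 \<le> Pmax"
    and ge1: "\<gamma>1 = p1 * a1 / (p2 * a1 + 1)" and ge2: "\<gamma>2 = p2 * a2 / (p1 * a2 + 1)"
    using fe unfolding feasible_def a1_a2_def by auto
  have d1: "p2 * a1 + 1 > 0" and d2: "p1 * a2 + 1 > 0" using p a by (auto intro: add_nonneg_pos)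
  have gn: "\<gamma>1 \<ge> 0" "\<gamma>2 \<ge> 0" unfolding ge1 ge2 using p a d1 d2 by auto
  have S1: "0 < Gam e1 N1 D1 \<and> Gam e1 N1 D1 \<le> \<gamma>1 \<and> Ffb e1 N1 D1 (Gam e1 N1 D1) = 0 \<and> D1 * Gam e1 N1 D1 \<le> m1 * \<gamma>1"
    using cx_SU[OF assms(7) assms(13), of m1 D1 \<gamma>1] m assms(5) gn F1 by simp
  have S2: "0 < Gam e2 N2 D2 \<and> Gam e2 N2 D2 \<le> \<gamma>2 \<and> Ffb e2 N2 D2 (Gam e2 N2 D2) = 0 \<and> D2 * Gam e2 N2 D2 \<le> m2 * \<gamma>2"
    using cx_SU[OF assms(8) assms(14), of m2 D2 \<gamma>2] m assms(5) gn F2 by simp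
  define g1 g2 where "g1 = Gam e1 N1 D1" "g2 = Gam e2 N2 D2"
  have g: "0 < g1" "g1 \<le> \<gamma>1" "Ffb e1 N1 D1 g1 = 0" "D1 * g1 \<le> m1 * \<gamma>1"
          "0 < g2" "g2 \<le> \<gamma>2" "Ffb e2 N2 D2 g2 = 0" "D2 * g2 \<le> m2 * \<gamma>2"
    using S1 S2 unfolding g1_g2_def by auto
  have e1: "\<gamma>1 * (p2 * a1 + 1) = p1 * a1" using ge1 d1 by simp
  have e2: "\<gamma>2 * (p1 * a2 + 1) = p2 * a2" using ge2 d2 by simp
  have "\<gamma>1 * \<gamma>2 * ((p2 * a1 + 1) * (p1 * a2 + 1)) = (p1 * a1) * (p2 * a2)"
    using e1 e2 by algebra
  moreover have "(p1 * a1) * (p2 * a2) < (p2 * a1 + 1) * (p1 * a2 + 1)"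
  proof -
    have "(p2 * a1 + 1) * (p1 * a2 + 1) = (p1 * a1) * (p2 * a2) + (p2 * a1 + p1 * a2 + 1)"
      by (simp add: algebra_simps)
    moreover have "p2 * a1 + p1 * a2 + 1 > 0" using p a by (simp add: add_nonneg_pos)
    ultimately show ?thesis by simp
  qed
  ultimately have "\<gamma>1 * \<gamma>2 * ((p2 * a1 + 1) * (p1 * a2 + 1)) < 1 * ((p2 * a1 + 1) * (p1 * a2 + 1))"
    by simp
  hence gg: "\<gamma>1 * \<gamma>2 < 1"
    by (rule mult_right_less_imp_less) (use d1 d2 in simp)
  have gg0: "g1 * g2 \<le> \<gamma>1 * \<gamma>2" using g by (intro mult_mono) auto
  have den: "a1 * a2 * (1 - \<gamma>1 * \<gamma>2) > 0" "a1 * a2 * (1 - g1 * g2) > 0"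
    using a gg gg0 by auto
  have den_le: "a1 * a2 * (1 - \<gamma>1 * \<gamma>2) \<le> a1 * a2 * (1 - g1 * g2)"
    using a gg0 by (intro mult_left_mono) auto
  have p1e: "p1 * (a1 * a2 * (1 - \<gamma>1 * \<gamma>2)) = \<gamma>1 * a2 + \<gamma>1 * \<gamma>2 * a1"
    using e1 e2 by algebra
  have p2e: "p2 * (a1 * a2 * (1 - \<gamma>1 * \<gamma>2)) = \<gamma>2 * a1 + \<gamma>1 * \<gamma>2 * a2"
    using e1 e2 by algebra
  have dz: "a1 * a2 * (1 - \<gamma>1 * \<gamma>2) \<noteq> 0" using den(1) by (metis less_irrefl)
  have p1f: "p1 = (\<gamma>1 * (a2 + \<gamma>2 * a1)) / (a1 * a2 * (1 - \<gamma>1 * \<gamma>2))"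
    by (rule eq_divide_imp[OF dz]) (use p1e in \<open>simp add: algebra_simps\<close>)
  have p2f: "p2 = (\<gamma>2 * (a1 + \<gamma>1 * a2)) / (a1 * a2 * (1 - \<gamma>1 * \<gamma>2))"
    by (rule eq_divide_imp[OF dz]) (use p2e in \<open>simp add: algebra_simps\<close>)
  define q1 q2 where "q1 = (g1 * a2 + g1 * g2 * a1) / (a1 * a2 * (1 - g1 * g2))"
    "q2 = (g2 * a1 + g1 * g2 * a2) / (a1 * a2 * (1 - g1 * g2))"
  have q1f: "q1 = (g1 * (a2 + g2 * a1)) / (a1 * a2 * (1 - g1 * g2))"
    unfolding q1_q2_def by (simp add: algebra_simps)
  have q2f: "q2 = (g2 * (a1 + g1 * a2)) / (a1 * a2 * (1 - g1 * g2))"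
    unfolding q1_q2_def by (simp add: algebra_simps)
  have n1: "g1 * (a2 + g2 * a1) \<le> \<gamma>1 * (a2 + \<gamma>2 * a1)"
    using g a by (intro mult_mono add_mono mult_right_mono) auto
  have n2: "g2 * (a1 + g1 * a2) \<le> \<gamma>2 * (a1 + \<gamma>1 * a2)"
    using g a by (intro mult_mono add_mono mult_right_mono) auto
  have q1le: "q1 \<le> p1" unfolding q1f p1f
    using n1 den den_le g a by (intro frac_le) auto
  have q2le: "q2 \<le> p2" unfolding q2f p2f
    using n2 den den_le g a by (intro frac_le) auto
  have q0: "q1 \<ge> 0" "q2 \<ge> 0" unfolding q1f q2f using g a den by auto
  have o1: "D1 * q1 \<le> m1 * p1"
  proof -
    have "D1 * g1 * (a2 + g2 * a1) \<le> m1 * \<gamma>1 * (a2 + \<gamma>2 * a1)"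
    proof (rule mult_mono)
      show "D1 * g1 \<le> m1 * \<gamma>1" using g by simp
      show "a2 + g2 * a1 \<le> a2 + \<gamma>2 * a1" using g a by (simp add: mult_right_mono)
      show "0 \<le> m1 * \<gamma>1" using gn m assms(5) by simp
      show "0 \<le> a2 + g2 * a1" using g a by simp
    qed
    hence "D1 * g1 * (a2 + g2 * a1) / (a1 * a2 * (1 - g1 * g2)) \<le> m1 * \<gamma>1 * (a2 + \<gamma>2 * a1) / (a1 * a2 * (1 - \<gamma>1 * \<gamma>2))"
      using den den_le g a assms(5) m by (intro frac_le) auto
    thus ?thesis unfolding q1f p1f by (simp add: mult.assoc)
  qed
  have o2: "D2 * q2 \<le> m2 * p2"
  proof -
    have "D2 * g2 * (a1 + g1 * a2) \<le> m2 * \<gamma>2 * (a1 + \<gamma>1 * a2)"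
    proof (rule mult_mono)
      show "D2 * g2 \<le> m2 * \<gamma>2" using g by simp
      show "a1 + g1 * a2 \<le> a1 + \<gamma>1 * a2" using g a by (simp add: mult_right_mono)
      show "0 \<le> m2 * \<gamma>2" using gn m assms(5) by simp
      show "0 \<le> a1 + g1 * a2" using g a by simp
    qed
    hence "D2 * g2 * (a1 + g1 * a2) / (a1 * a2 * (1 - g1 * g2)) \<le> m2 * \<gamma>2 * (a1 + \<gamma>1 * a2) / (a1 * a2 * (1 - \<gamma>1 * \<gamma>2))"
      using den den_le g a assms(5) m by (intro frac_le) auto
    thus ?thesis unfolding q2f p2f by (simp add: mult.assoc)
  qed
  have "g1 * g2 < 1" using gg gg0 by simp
  thus ?thesis unfolding Let_def g1_g2_def[symmetric] a1_a2_def[symmetric] q1_q2_def[symmetric]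
    using g q0 q1le q2le p o1 o2 m by auto
qed

theorem corollary1:
  fixes h1 h2 :: complex
    and D1 D2 mhat Pmax N1 N2 e1 e2 :: real
  assumes "h1 \<noteq> 0" "h2 \<noteq> 0" "cmod h1 > cmod h2"
    and "D1 < D2" "mhat > 0" "Pmax > 0" "N1 > 0" "N2 > 0"
    and "0 < e1" "e1 < 1" "0 < e2" "e2 < 1"
    and "Qinv e1 / sqrt N1 \<le> 2 * sqrt (ln 2) / (4 - sqrt 2)"
    and "Qinv e2 / sqrt N2 \<le> 2 * sqrt (ln 2) / (4 - sqrt 2)"
    and "\<exists>m1 m2 p1 p2 \<gamma>1 \<gamma>2. feasible h1 h2 D1 D2 mhat Pmax N1 N2 e1 e2 m1 m2 p1 p2 \<gamma>1 \<gamma>2"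
  shows "let g1 = Gam e1 N1 D1; g2 = Gam e2 N2 D2;
             a1 = (cmod h1)\<^sup>2; a2 = (cmod h2)\<^sup>2;
             p1 = (g1 * a2 + g1 * g2 * a1) / (a1 * a2 * (1 - g1 * g2));
             p2 = (g2 * a1 + g1 * g2 * a2) / (a1 * a2 * (1 - g1 * g2))
         in feasible h1 h2 D1 D2 mhat Pmax N1 N2 e1 e2 D1 D2 p1 p2 g1 g2 \<and>
            (\<forall>m1' m2' p1' p2' \<gamma>1' \<gamma>2'.
               feasible h1 h2 D1 D2 mhat Pmax N1 N2 e1 e2 m1' m2' p1' p2' \<gamma>1' \<gamma>2' \<longrightarrow>
               D1 * p1 + D2 * p2 \<le> m1' * p1' + m2' * p2')"
proof -
  obtain m1 m2 p1 p2 \<gamma>1 \<gamma>2 where fe: "feasible h1 h2 D1 D2 mhat Pmax N1 N2 e1 e2 m1 m2 p1 p2 \<gamma>1 \<gamma>2"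
    using assms(15) by blast
  define g1 g2 a1 a2 where "g1 = Gam e1 N1 D1" "g2 = Gam e2 N2 D2" "a1 = (cmod h1)\<^sup>2" "a2 = (cmod h2)\<^sup>2"
  define q1 q2 where "q1 = (g1 * a2 + g1 * g2 * a1) / (a1 * a2 * (1 - g1 * g2))"
    "q2 = (g2 * a1 + g1 * g2 * a2) / (a1 * a2 * (1 - g1 * g2))"
  have C: "0 < g1 \<and> 0 < g2 \<and> Ffb e1 N1 D1 g1 = 0 \<and> Ffb e2 N2 D2 g2 = 0 \<and> g1 * g2 < 1 \<and>
            0 \<le> q1 \<and> 0 \<le> q2 \<and> q1 + q2 \<le> Pmax \<and> mhat \<le> D1 \<and> mhat \<le> D2"
    using cx_compare[OF assms(1-14) fe] unfolding Let_def g1_g2_a1_a2_def[symmetric] q1_q2_def[symmetric] by auto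
  have a: "a1 > 0" "a2 > 0" unfolding g1_g2_a1_a2_def using assms(1,2) by auto
  have den: "a1 * a2 * (1 - g1 * g2) > 0" using C a by simp
  have nz: "a1 \<noteq> 0" "a2 \<noteq> 0" "g1 * g2 \<noteq> 1" using C a by auto
  have q1D: "q1 * (a1 * a2 * (1 - g1 * g2)) = g1 * a2 + g1 * g2 * a1"
    unfolding q1_q2_def using nz by simp
  have q2D: "q2 * (a1 * a2 * (1 - g1 * g2)) = g2 * a1 + g1 * g2 * a2"
    unfolding q1_q2_def using nz by simp
  have "(q1 * a1 - g1 * (q2 * a1 + 1)) * (a1 * a2 * (1 - g1 * g2))
      = a1 * (q1 * (a1 * a2 * (1 - g1 * g2))) - g1 * a1 * (q2 * (a1 * a2 * (1 - g1 * g2))) - g1 * (a1 * a2 * (1 - g1 * g2))"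
    by (simp add: algebra_simps)
  also have "\<dots> = 0" unfolding q1D q2D by (simp add: algebra_simps)
  finally have "(q1 * a1 - g1 * (q2 * a1 + 1)) * (a1 * a2 * (1 - g1 * g2)) = 0" .
  hence "q1 * a1 - g1 * (q2 * a1 + 1) = 0" using den by (metis mult_eq_0_iff less_irrefl)
  hence x1: "q1 * a1 = g1 * (q2 * a1 + 1)" by simp
  have "(q2 * a2 - g2 * (q1 * a2 + 1)) * (a1 * a2 * (1 - g1 * g2))
      = a2 * (q2 * (a1 * a2 * (1 - g1 * g2))) - g2 * a2 * (q1 * (a1 * a2 * (1 - g1 * g2))) - g2 * (a1 * a2 * (1 - g1 * g2))"
    by (simp add: algebra_simps)
  also have "\<dots> = 0" unfolding q1D q2D by (simp add: algebra_simps)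
  finally have "(q2 * a2 - g2 * (q1 * a2 + 1)) * (a1 * a2 * (1 - g1 * g2)) = 0" .
  hence "q2 * a2 - g2 * (q1 * a2 + 1) = 0" using den by (metis mult_eq_0_iff less_irrefl)
  hence x2: "q2 * a2 = g2 * (q1 * a2 + 1)" by simp
  have y: "q2 * a1 + 1 > 0" "q1 * a2 + 1 > 0" using C a by (auto intro: add_nonneg_pos)
  have eq1: "g1 = q1 * a1 / (q2 * a1 + 1)" using x1 y by (simp add: eq_divide_eq)
  have eq2: "g2 = q2 * a2 / (q1 * a2 + 1)" using x2 y by (simp add: eq_divide_eq)
  have fq: "feasible h1 h2 D1 D2 mhat Pmax N1 N2 e1 e2 D1 D2 q1 q2 g1 g2"
    unfolding feasible_def using C eq1 eq2 unfolding g1_g2_a1_a2_def by simp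
  have opt: "\<forall>m1' m2' p1' p2' \<gamma>1' \<gamma>2'.
               feasible h1 h2 D1 D2 mhat Pmax N1 N2 e1 e2 m1' m2' p1' p2' \<gamma>1' \<gamma>2' \<longrightarrow>
               D1 * q1 + D2 * q2 \<le> m1' * p1' + m2' * p2'"
  proof (intro allI impI)
    fix m1' m2' p1' p2' \<gamma>1' \<gamma>2'
    assume "feasible h1 h2 D1 D2 mhat Pmax N1 N2 e1 e2 m1' m2' p1' p2' \<gamma>1' \<gamma>2'"
    from cx_compare[OF assms(1-14) this]
    show "D1 * q1 + D2 * q2 \<le> m1' * p1' + m2' * p2'"
      unfolding Let_def g1_g2_a1_a2_def[symmetric] q1_q2_def[symmetric] by auto
  qed
  show ?thesis unfolding Let_def g1_g2_a1_a2_def[symmetric] q1_q2_def[symmetric] using fq opt by simp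
qed

end
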